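(* Let $p$ be a prime, $m$ a positive integer, $q=p^m$, and let $l,s$ be positive integers with $q-1=ls$; let $r$ be a positive integer. Let $\gamma$ be a primitive element of $\mathbb{F}_q$, $\xi=\gamma^s$, $f\in\mathbb{F}_q[x]$, and $A_i=f(\xi^i)$ for $0\le i\le l-1$. If $P(x)=x^rf(x^s)$ is a permutation polynomial of $\mathbb{F}_q$, then $l \mid 2\,\mathrm{Ind}_\gamma(A_0A_1\cdots A_{l-1})$.
   Context: A permutation polynomial of $\mathbb{F}_q$ is a polynomial inducing a bijection $\mathbb{F}_q\to\mathbb{F}_q$. For nonzero $a\in\mathbb{F}_q$, $\mathrm{Ind}_\gamma(a)$ denotes the residue class $b \bmod (q-1)$ with $a=\gamma^b$; since $l\mid q-1$, divisibility of $\mathrm{Ind}_\gamma(a)$ (or of a multiple of it) by $l$ is well defined. (When $P$ is a permutation polynomial all $A_i$ are nonzero, so the index is defined.) *)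

theory Defs
  imports "HOL-Computational_Algebra.Polynomial"
begin

definition primitive_element :: "'a::{finite,field} \<Rightarrow> bool" where
  "primitive_element g \<longleftrightarrow> g \<noteq> 0 \<and> (\<forall>a. a \<noteq> 0 \<longrightarrow> (\<exists>b::nat. a = g ^ b))"

definition Ind :: "'a::{finite,field} \<Rightarrow> 'a \<Rightarrow> nat" where
  "Ind g a = (THE b. b < card (UNIV :: 'a set) - 1 \<and> g ^ b = a)"

definition permutation_poly :: "'a::{finite,field} poly \<Rightarrow> bool" where
  "permutation_poly P \<longleftrightarrow> bij (poly P)"

end

theory Submission
  imports Defs
begin

lemma prod_mod_rep:
  fixes g :: "nat \<Rightarrow> 'b::comm_monoid_mult"
  shows "(\<Prod>j<l*s. g (j mod l)) = (\<Prod>i<l. g i) ^ s"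
proof (induction s)
  case 0 then show ?case by simp
next
  case (Suc s)
  have "{..<l * Suc s} = {..<l*s} \<union> {l*s..<l*s+l}" by auto
  then have "(\<Prod>j<l*Suc s. g (j mod l)) = (\<Prod>j<l*s. g (j mod l)) * (\<Prod>j\<in>{l*s..<l*s+l}. g (j mod l))"
    by (simp add: prod.union_disjoint ivl_disj_int)
  also have "(\<Prod>j\<in>{l*s..<l*s+l}. g (j mod l)) = (\<Prod>i<l. g i)"
  proof -
    have "(\<Prod>j\<in>{l*s..<l*s+l}. g (j mod l)) = (\<Prod>i\<in>{0..<l}. g ((i + l*s) mod l))"
      using prod.shift_bounds_nat_ivl[of "\<lambda>j. g (j mod l)" 0 "l*s" l] by (simp add: add.commute)
    also have "\<dots> = (\<Prod>i<l. g i)"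
      by (intro prod.cong) auto
    finally show ?thesis .
  qed
  finally show ?case using Suc by (simp add: mult.commute)
qed

theorem theorem2p1:
  fixes p m l s r :: nat and \<gamma> :: "'a::{finite,field}" and f :: "'a poly"
  assumes "prime p" and "m > 0" and "card (UNIV :: 'a set) = p ^ m"
    and "l > 0" and "s > 0" and "card (UNIV :: 'a set) - 1 = l * s" and "r > 0"
    and "primitive_element \<gamma>"
    and "permutation_poly (monom 1 r * pcompose f (monom 1 s))"
  shows "l dvd 2 * Ind \<gamma> (\<Prod>i<l. poly f ((\<gamma> ^ s) ^ i))"
proof -
  define U where "U = (UNIV - {0} :: 'a set)"
  define n where "n = card (UNIV :: 'a set) - 1"
  have finU: "finite U" by simp
  have cardU: "card U = n" unfolding U_def n_def by (simp add: card_Diff_singleton)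
  have n_ls: "n = l * s" using assms(6) n_def by simp
  have npos: "n > 0" using n_ls assms(4,5) by simp
  define W where "W = (\<Prod>x\<in>U. x)"
  have W0: "W \<noteq> 0" unfolding W_def U_def by simp
  have ferm: "a ^ n = 1" if a: "a \<noteq> 0" for a :: 'a
  proof -
    have inj: "inj_on (\<lambda>x. a * x) U" using a by (auto simp: inj_on_def)
    have img: "(\<lambda>x. a * x) ` U = U"
    proof
      show "(\<lambda>x. a * x) ` U \<subseteq> U" using a by (auto simp: U_def)
      show "U \<subseteq> (\<lambda>x. a * x) ` U"
      proof
        fix y assume "y \<in> U"
        then have "inverse a * y \<in> U" "y = a * (inverse a * y)" using a by (auto simp: U_def)
        then show "y \<in> (\<lambda>x. a * x) ` U" by blast
      qed
    qed
    have "W = (\<Prod>x\<in>(\<lambda>x. a * x) ` U. x)" unfolding W_def using img by simp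
    also have "\<dots> = (\<Prod>x\<in>U. a * x)" using prod.reindex[OF inj] by simp
    also have "\<dots> = a ^ n * W" unfolding W_def using cardU by (simp add: prod.distrib)
    finally show ?thesis using W0 by simp
  qed
  have g0: "\<gamma> \<noteq> 0" and gen: "\<And>a. a \<noteq> 0 \<Longrightarrow> \<exists>b::nat. a = \<gamma> ^ b"
    using assms(8) unfolding primitive_element_def by auto
  have gn: "\<gamma> ^ n = 1" using ferm g0 by simp
  have gmod: "\<gamma> ^ b = \<gamma> ^ (b mod n)" for b
  proof -
    have "\<gamma> ^ b = \<gamma> ^ (n * (b div n) + b mod n)" by simp
    also have "\<dots> = \<gamma> ^ (b mod n)" by (simp only: power_add power_mult gn) simp
    finally show ?thesis .
  qed
  have imgG: "(\<lambda>b. \<gamma> ^ b) ` {..<n} = U"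
  proof
    show "(\<lambda>b. \<gamma> ^ b) ` {..<n} \<subseteq> U" using g0 by (auto simp: U_def)
    show "U \<subseteq> (\<lambda>b. \<gamma> ^ b) ` {..<n}"
    proof
      fix a assume "a \<in> U"
      then obtain b where "a = \<gamma> ^ b" using gen by (auto simp: U_def)
      then have "a = \<gamma> ^ (b mod n)" "b mod n < n" using gmod npos by auto
      then show "a \<in> (\<lambda>b. \<gamma> ^ b) ` {..<n}" by blast
    qed
  qed
  have injG: "inj_on (\<lambda>b. \<gamma> ^ b) {..<n}"
    using inj_on_iff_eq_card[of "{..<n}" "\<lambda>b. \<gamma> ^ b"] imgG cardU by simp
  have W2: "W ^ 2 = 1"
  proof -
    have inj: "inj_on inverse U" by (auto simp: inj_on_def)
    have img: "inverse ` U = U"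
    proof
      show "inverse ` U \<subseteq> U" by (auto simp: U_def)
      show "U \<subseteq> inverse ` U"
      proof
        fix y assume "y \<in> U"
        then have "inverse y \<in> U" "y = inverse (inverse y)" by (auto simp: U_def)
        then show "y \<in> inverse ` U" by blast
      qed
    qed
    have "W = (\<Prod>x\<in>inverse ` U. x)" unfolding W_def using img by simp
    also have "\<dots> = (\<Prod>x\<in>U. inverse x)" using prod.reindex[OF inj] by simp
    also have "\<dots> = inverse W" unfolding W_def using prod_inversef[of "\<lambda>x. x" U] by (simp add: comp_def)
    finally have "W = inverse W" .
    then have "W * W = W * inverse W" by simp
    then show ?thesis using W0 by (simp add: power2_eq_square)
  qed
  define P where "P = monom 1 r * pcompose f (monom 1 s)"
  have polyP: "poly P x = x ^ r * poly f (x ^ s)" for x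
    unfolding P_def by (simp add: poly_monom poly_pcompose)
  have P0: "poly P 0 = 0" using polyP assms(7) by simp
  have bijP: "bij (poly P)" using assms(9) unfolding permutation_poly_def P_def by simp
  have imgP: "poly P ` U = U"
  proof -
    have "poly P ` U = poly P ` UNIV - poly P ` {0}"
      unfolding U_def by (rule image_set_diff[OF bij_is_inj[OF bijP]])
    then show ?thesis using bijP P0 by (simp add: bij_def U_def)
  qed
  have injP: "inj_on (poly P) U" using bij_is_inj[OF bijP] inj_on_subset by blast
  define A where "A = (\<Prod>i<l. poly f ((\<gamma> ^ s) ^ i))"
  have "W = (\<Prod>x\<in>poly P ` U. x)" unfolding W_def using imgP by simp
  also have "\<dots> = (\<Prod>x\<in>U. poly P x)" using prod.reindex[OF injP] by simp
  also have "\<dots> = (\<Prod>x\<in>U. x ^ r * poly f (x ^ s))" using polyP by simp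
  also have "\<dots> = W ^ r * (\<Prod>x\<in>U. poly f (x ^ s))"
    unfolding W_def by (simp add: prod.distrib prod_power_distrib)
  also have "(\<Prod>x\<in>U. poly f (x ^ s)) = A ^ s"
  proof -
    have "(\<Prod>x\<in>U. poly f (x ^ s)) = (\<Prod>x\<in>(\<lambda>b. \<gamma> ^ b) ` {..<n}. poly f (x ^ s))"
      using imgG by simp
    also have "\<dots> = (\<Prod>j<n. poly f ((\<gamma> ^ j) ^ s))" using prod.reindex[OF injG] by simp
    also have "\<dots> = (\<Prod>j<l*s. poly f ((\<gamma> ^ s) ^ (j mod l)))"
    proof -
      have gl: "(\<gamma> ^ s) ^ l = 1" using gn n_ls by (simp add: power_mult[symmetric] mult.commute)
      have "(\<gamma> ^ j) ^ s = (\<gamma> ^ s) ^ (j mod l)" for j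
      proof -
        have "(\<gamma> ^ j) ^ s = (\<gamma> ^ s) ^ j" by (simp add: power_mult[symmetric] mult.commute)
        also have "\<dots> = (\<gamma> ^ s) ^ (l * (j div l) + j mod l)" by simp
        also have "\<dots> = (\<gamma> ^ s) ^ (j mod l)" by (simp only: power_add power_mult gl) simp
        finally show ?thesis .
      qed
      then show ?thesis using n_ls by simp
    qed
    also have "\<dots> = A ^ s" unfolding A_def by (rule prod_mod_rep)
    finally show ?thesis .
  qed
  finally have eq: "W = W ^ r * A ^ s" .
  have "W ^ (r+1) = W ^ r * W" by simp
  also have "\<dots> = W ^ (2*r) * A ^ s" using eq by (simp add: power_add mult_2)
  also have "\<dots> = A ^ s" by (simp add: power_mult W2)
  finally have "A ^ s = W ^ (r+1)" by simp
  then have "A ^ (s*2) = (W ^ 2) ^ (r+1)" by (metis power_mult mult.commute)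
  then have A2: "A ^ (2*s) = 1" using W2 by (simp add: mult.commute)
  then have A0: "A \<noteq> 0" using assms(5) by (auto simp: zero_power)
  have ex: "\<exists>!b. b < card (UNIV :: 'a set) - 1 \<and> \<gamma> ^ b = A"
  proof -
    have "A \<in> U" using A0 by (simp add: U_def)
    then obtain b where b: "b < n" "\<gamma> ^ b = A" using imgG by force
    moreover have "b' = b" if "b' < n" "\<gamma> ^ b' = A" for b'
      using injG b that by (auto simp: inj_on_def)
    ultimately show ?thesis unfolding n_def by blast
  qed
  define k where "k = Ind \<gamma> A"
  have k: "k < n" "\<gamma> ^ k = A" using theI'[OF ex] unfolding k_def Ind_def n_def by auto
  have "\<gamma> ^ (2 * s * k) = 1" using A2 k(2)
    by (metis power_mult mult.commute)
  then have "\<gamma> ^ ((2 * s * k) mod n) = \<gamma> ^ 0" using gmod by simp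
  then have "(2 * s * k) mod n = 0" using injG npos by (auto simp: inj_on_def)
  then have "l * s dvd (2 * k) * s" using n_ls by (simp add: mod_eq_0_iff_dvd mult.commute mult.left_commute)
  then have "l dvd 2 * k" using assms(5) by simp
  then show ?thesis unfolding k_def A_def .
qed

end
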